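(* Let $\varphi$ be an endomorphism of a periodic abelian group $A$. The following are equivalent: (MF) there is a subgroup $A_0$ of finite index in $A$ on which $\varphi$ acts as a multiplication; (FM) there is a finite $\varphi$-invariant subgroup $A_1$ of $A$ such that $\varphi$ induces a multiplication on $A/A_1$.
   Context: Abelian groups are written additively. On a periodic abelian group, a multiplication is the componentwise action of an element $\alpha=(\alpha_p)_p\in\prod_p\mathbb{Z}_p$ ($\mathbb{Z}_p$ the $p$-adic integers), $\alpha_p$ acting on the $p$-primary component in the natural way. "$\varphi$ acts as a multiplication on $A_0$" means $\varphi(a)=\alpha a$ for all $a\in A_0$, for some such $\alpha$. *)

theory Defs
  imports "HOL-Algebra.Algebra" "HOL-Number_Theory.Number_Theory"
begin

text \<open>The p-adic integers Z_p, represented as the inverse limit of the rings Z/p^k: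
  a compatible sequence of residues x k in [0, p^k).\<close>
definition padic_int :: "nat \<Rightarrow> (nat \<Rightarrow> int) \<Rightarrow> bool" where
  "padic_int p x \<longleftrightarrow>
     (\<forall>k. 0 \<le> x k \<and> x k < int p ^ k \<and> x (Suc k) mod (int p ^ k) = x k)"

definition padic_scalar :: "(nat \<Rightarrow> nat \<Rightarrow> int) \<Rightarrow> bool" where
  "padic_scalar \<alpha> \<longleftrightarrow> (\<forall>p::nat. Factorial_Ring.prime p \<longrightarrow> padic_int p (\<alpha> p))"

text \<open>Natural action of alpha on an element a of finite order n = prod p^(e_p) of a
  (multiplicatively written) abelian group: alpha_p acts on the p-primary component
  (of order p^(e_p)) as multiplication by alpha_p mod p^(e_p); altogether this is
  the power a^k for any integer k with k = alpha_p(e_p) mod p^(e_p) for all p | n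
  (such k exists by CRT, and a^k does not depend on its choice).\<close>
definition padic_mult :: "('a, 'b) monoid_scheme \<Rightarrow> (nat \<Rightarrow> nat \<Rightarrow> int) \<Rightarrow> 'a \<Rightarrow> 'a" where
  "padic_mult G \<alpha> a =
     (let n = group.ord G a in
      a [^]\<^bsub>G\<^esub> (SOME k::int. \<forall>p\<in>prime_factors n.
         [k = \<alpha> p (multiplicity p n)] (mod (int p ^ multiplicity p n))))"

definition periodic_group :: "('a, 'b) monoid_scheme \<Rightarrow> bool" where
  "periodic_group G \<longleftrightarrow> (\<forall>a\<in>carrier G. group.ord G a \<noteq> 0)"

end

theory Submission
  imports Defs
begin


definition PC :: "(nat \<Rightarrow> nat \<Rightarrow> int) \<Rightarrow> nat \<Rightarrow> int \<Rightarrow> bool" where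
  "PC \<alpha> n k \<longleftrightarrow> (\<forall>p\<in>prime_factors n.
         [k = \<alpha> p (multiplicity p n)] (mod (int p ^ multiplicity p n)))"

lemma PC_exists:
  assumes "n > 0" shows "\<exists>k. PC \<alpha> n k"
proof -
  let ?m = "\<lambda>p. p ^ multiplicity p n"
  let ?u = "\<lambda>p. nat (\<alpha> p (multiplicity p n) mod int (?m p))"
  have cop: "\<forall>i\<in>prime_factors n. \<forall>j\<in>prime_factors n. i \<noteq> j \<longrightarrow> coprime (?m i) (?m j)"
    by (auto intro!: coprime_power_left_iff[THEN iffD2] coprime_power_right_iff[THEN iffD2] primes_coprime)
  obtain x where x: "\<forall>i\<in>prime_factors n. [x = ?u i] (mod ?m i)"
    using chinese_remainder_nat[OF _ cop, of ?u] by auto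
  have "PC \<alpha> n (int x)"
    unfolding PC_def
  proof
    fix p assume p: "p \<in> prime_factors n"
    have pp: "p > 0" using p by (simp add: prime_factors_gt_0_nat)
    have "[int x = int (?u p)] (mod int (?m p))" using x p cong_int_iff by blast
    moreover have "int (?u p) = \<alpha> p (multiplicity p n) mod int (?m p)"
      using pp by simp
    ultimately show "[int x = \<alpha> p (multiplicity p n)] (mod (int p ^ multiplicity p n))"
      by (simp add: cong_def)
  qed
  thus ?thesis by blast
qed

lemma prod_coprime_dvd:
  fixes m :: "'a \<Rightarrow> int"
  assumes "finite A" "\<And>i j. i \<in> A \<Longrightarrow> j \<in> A \<Longrightarrow> i \<noteq> j \<Longrightarrow> coprime (m i) (m j)"
    "\<And>i. i \<in> A \<Longrightarrow> m i dvd d"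
  shows "prod m A dvd d"
  using assms
proof (induction A rule: finite_induct)
  case (insert x F)
  have "coprime (m x) (prod m F)"
    by (rule prod_coprime_right) (use insert in auto)
  then show ?case using insert by (simp add: divides_mult)
qed simp

lemma PC_cong:
  assumes "n > 0" "\<forall>p\<in>prime_factors n. [k = k'] (mod (int p ^ multiplicity p n))"
  shows "[k = k'] (mod int n)"
proof -
  have "(\<Prod>p\<in>prime_factors n. int p ^ multiplicity p n) dvd (k' - k)"
  proof (rule prod_coprime_dvd)
    show "\<And>i j. i \<in> prime_factors n \<Longrightarrow> j \<in> prime_factors n \<Longrightarrow> i \<noteq> j \<Longrightarrow>
        coprime (int i ^ multiplicity i n) (int j ^ multiplicity j n)"
      by (auto intro!: coprime_power_left_iff[THEN iffD2] coprime_power_right_iff[THEN iffD2] primes_coprime)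
    show "\<And>i. i \<in> prime_factors n \<Longrightarrow> int i ^ multiplicity i n dvd k' - k"
      using assms(2) by (auto simp: cong_iff_dvd_diff dvd_diff_commute)
  qed simp
  moreover have "(\<Prod>p\<in>prime_factors n. int p ^ multiplicity p n) = int n"
  proof -
    have "int (\<Prod>p\<in>prime_factors n. p ^ multiplicity p n) = int n"
      using prod_prime_factors[of n] assms(1) by simp
    then show ?thesis by (simp add: of_nat_prod)
  qed
  ultimately show ?thesis by (simp add: cong_iff_dvd_diff dvd_diff_commute)
qed

lemma padic_compat:
  assumes "padic_int p x" "j \<le> k"
  shows "[x k = x j] (mod int p ^ j)"
  using assms(2)
proof (induction k)
  case 0 then show ?case by simp
next
  case (Suc k)
  show ?case
  proof (cases "j = Suc k")
    case True then show ?thesis by simp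
  next
    case False
    then have jk: "j \<le> k" using Suc by simp
    have "[x (Suc k) = x k] (mod int p ^ k)"
      using assms(1) unfolding padic_int_def cong_def by (metis mod_mod_trivial)
    then have "[x (Suc k) = x k] (mod int p ^ j)"
      by (rule cong_dvd_modulus) (simp add: jk le_imp_power_dvd)
    then show ?thesis using Suc jk cong_trans by blast
  qed
qed

lemma PC_dvd:
  assumes "padic_scalar \<alpha>" "m dvd n" "n > 0" "PC \<alpha> n k"
  shows "PC \<alpha> m k"
  unfolding PC_def
proof
  fix p assume p: "p \<in> prime_factors m"
  have m0: "m \<noteq> 0" using assms by auto
  have pn: "p \<in> prime_factors n" using p assms(2,3) m0
    by (metis dvd_trans in_prime_factors_iff not_gr0)
  have le: "multiplicity p m \<le> multiplicity p n"
    using dvd_imp_multiplicity_le assms(2,3) by auto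
  have pr: "Factorial_Ring.prime p" using p by auto
  have "[k = \<alpha> p (multiplicity p n)] (mod (int p ^ multiplicity p n))"
    using assms(4) pn unfolding PC_def by blast
  then have 1: "[k = \<alpha> p (multiplicity p n)] (mod (int p ^ multiplicity p m))"
    by (rule cong_dvd_modulus) (simp add: le le_imp_power_dvd)
  have "padic_int p (\<alpha> p)" using assms(1) pr unfolding padic_scalar_def by blast
  then have 2: "[\<alpha> p (multiplicity p n) = \<alpha> p (multiplicity p m)] (mod (int p ^ multiplicity p m))"
    using padic_compat le by blast
  show "[k = \<alpha> p (multiplicity p m)] (mod (int p ^ multiplicity p m))"
    using 1 2 cong_trans by blast
qed

lemma padic_mult_pow:
  assumes "group H" "x \<in> carrier H" "group.ord H x dvd n" "n > 0" "PC \<alpha> n k" "padic_scalar \<alpha>"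
  shows "padic_mult H \<alpha> x = x [^]\<^bsub>H\<^esub> k"
proof -
  interpret group H by fact
  let ?d = "group.ord H x"
  have d0: "?d > 0" using assms(3,4) by (metis dvd_0_left_iff not_gr0)
  have "PC \<alpha> ?d k" using PC_dvd assms by blast
  moreover obtain k0 where "PC \<alpha> ?d k0" using PC_exists d0 by blast
  then have "PC \<alpha> ?d (SOME k. PC \<alpha> ?d k)" by (rule someI)
  ultimately have "[(SOME k. PC \<alpha> ?d k) = k] (mod int ?d)"
    using PC_cong[OF d0] unfolding PC_def by (meson cong_sym cong_trans)
  then have "x [^]\<^bsub>H\<^esub> (SOME k. PC \<alpha> ?d k) = x [^]\<^bsub>H\<^esub> k"
    using int_pow_eq[OF assms(2)] by (simp add: cong_iff_dvd_diff dvd_diff_commute)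
  then show ?thesis unfolding padic_mult_def PC_def Let_def by simp
qed



lemma ord_hom_dvd:
  assumes "group G" "group H" "h \<in> hom G H" "x \<in> carrier G"
  shows "group.ord H (h x) dvd group.ord G x"
proof -
  interpret group_hom G H h
    using assms by (simp add: group_hom_axioms.intro group_hom_def)
  have "h x [^]\<^bsub>H\<^esub> (G.ord x) = h (x [^]\<^bsub>G\<^esub> G.ord x)"
    using hom_nat_pow[OF assms(4)] by metis
  also have "\<dots> = \<one>\<^bsub>H\<^esub>" using assms(4) by simp
  finally show ?thesis using H.pow_eq_id assms(4) by simp
qed

lemma periodic_pos: "periodic_group G \<Longrightarrow> a \<in> carrier G \<Longrightarrow> group.ord G a > 0"
  unfolding periodic_group_def by auto

locale PM = comm_group G for G (structure) +
  fixes \<alpha>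
  assumes per: "periodic_group G" and sc: "padic_scalar \<alpha>"
begin

abbreviation "m \<equiv> padic_mult G \<alpha>"

lemma obtK: assumes "n > 0" obtains k where "PC \<alpha> n k" using PC_exists assms by blast

lemma m_pow: "a \<in> carrier G \<Longrightarrow> ord a dvd n \<Longrightarrow> n > 0 \<Longrightarrow> PC \<alpha> n k \<Longrightarrow> m a = a [^] k"
  using padic_mult_pow[OF is_group _ _ _ _ sc] by blast

lemma m_closed: assumes "a \<in> carrier G" shows "m a \<in> carrier G"
proof -
  obtain k where "PC \<alpha> (ord a) k" using obtK periodic_pos[OF per assms] by blast
  then show ?thesis using m_pow[of a "ord a" k] assms periodic_pos[OF per assms] by simp
qed

lemma m_mult: assumes "a \<in> carrier G" "b \<in> carrier G" shows "m (a \<otimes> b) = m a \<otimes> m b"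
proof -
  let ?n = "ord a * ord b"
  have n0: "?n > 0" using periodic_pos[OF per] assms by simp
  obtain k where k: "PC \<alpha> ?n k" using obtK n0 by blast
  have "m (a \<otimes> b) = (a \<otimes> b) [^] k"
    using m_pow[OF _ abelian_ord_mul_divides[OF assms] n0 k] assms by simp
  moreover have "m a = a [^] k" using m_pow[OF assms(1) _ n0 k] by simp
  moreover have "m b = b [^] k" using m_pow[OF assms(2) _ n0 k] by simp
  ultimately show ?thesis using int_pow_distrib assms by simp
qed

lemma m_hom_comm: assumes "\<phi> \<in> hom G G" "a \<in> carrier G" shows "m (\<phi> a) = \<phi> (m a)"
proof -
  have n0: "ord a > 0" using periodic_pos[OF per] assms by simp
  obtain k where k: "PC \<alpha> (ord a) k" using obtK n0 by blast
  have pa: "\<phi> a \<in> carrier G" using hom_in_carrier[OF assms(1,2)] .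
  have "m (\<phi> a) = \<phi> a [^] k"
    using m_pow[OF pa ord_hom_dvd[OF is_group is_group assms] n0 k] .
  also have "\<dots> = \<phi> (a [^] k)" using hom_int_pow[OF assms(1) assms(2) is_group is_group] by simp
  also have "\<dots> = \<phi> (m a)" using m_pow[OF assms(2) _ n0 k] by simp
  finally show ?thesis .
qed

lemma m_quot: assumes "subgroup N G" "a \<in> carrier G"
  shows "padic_mult (G Mod N) \<alpha> (N #> a) = N #> m a"
proof -
  have nN: "N \<lhd> G" using subgroup_imp_normal assms(1) by blast
  interpret normal N G by (rule nN)
  have gq: "group (G Mod N)" by (rule factorgroup_is_group)
  have hq: "(\<lambda>a. N #> a) \<in> hom G (G Mod N)" by (rule r_coset_hom_Mod)
  have n0: "ord a > 0" using periodic_pos[OF per] assms by simp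
  obtain k where k: "PC \<alpha> (ord a) k" using obtK n0 by blast
  have ca: "N #> a \<in> carrier (G Mod N)" using hom_in_carrier[OF hq assms(2)] .
  have "padic_mult (G Mod N) \<alpha> (N #> a) = (N #> a) [^]\<^bsub>G Mod N\<^esub> k"
    using padic_mult_pow[OF gq ca ord_hom_dvd[OF is_group gq hq assms(2)] n0 k sc] .
  also have "\<dots> = N #> (a [^] k)"
    using hom_int_pow[OF hq assms(2) is_group gq] by simp
  also have "\<dots> = N #> m a" using m_pow[OF assms(2) _ n0 k] by simp
  finally show ?thesis .
qed

end


locale MainL = comm_group G for G (structure) +
  fixes \<phi> :: "'a \<Rightarrow> 'a"
  assumes per: "periodic_group G" and hom: "\<phi> \<in> hom G G"
begin

lemma main:
  shows "(\<exists>A0. subgroup A0 G \<and> finite (rcosets\<^bsub>G\<^esub> A0) \<and>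
            (\<exists>\<alpha>. padic_scalar \<alpha> \<and> (\<forall>a\<in>A0. \<phi> a = padic_mult G \<alpha> a)))
     \<longleftrightarrow>
         (\<exists>A1. subgroup A1 G \<and> finite A1 \<and> \<phi> ` A1 \<subseteq> A1 \<and>
            (\<exists>\<alpha>. padic_scalar \<alpha> \<and>
               (\<forall>a\<in>carrier G. A1 #>\<^bsub>G\<^esub> \<phi> a = padic_mult (G Mod A1) \<alpha> (A1 #>\<^bsub>G\<^esub> a))))"
proof -
  interpret F: group_hom G G \<phi> using hom by (simp add: group_hom_axioms.intro group_hom_def is_group)
  have psi_hom: "(\<lambda>a. \<phi> a \<otimes> inv (padic_mult G \<alpha> a)) \<in> hom G G" if sc: "padic_scalar \<alpha>" for \<alpha>
  proof -
    interpret P: PM G \<alpha> using per sc comm_group_axioms by (simp add: PM_def PM_axioms_def)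
    show ?thesis
    proof (rule homI)
      fix a assume "a \<in> carrier G"
      then show "\<phi> a \<otimes> inv P.m a \<in> carrier G" using P.m_closed by simp
    next
      fix a b assume ab: "a \<in> carrier G" "b \<in> carrier G"
      have c: "\<phi> a \<in> carrier G" "\<phi> b \<in> carrier G" "inv P.m a \<in> carrier G" "inv P.m b \<in> carrier G"
        using ab P.m_closed by auto
      have "\<phi> (a \<otimes> b) \<otimes> inv P.m (a \<otimes> b) = (\<phi> a \<otimes> \<phi> b) \<otimes> (inv P.m a \<otimes> inv P.m b)"
        using ab P.m_mult P.m_closed inv_mult by simp
      also have "\<dots> = (\<phi> a \<otimes> inv P.m a) \<otimes> (\<phi> b \<otimes> inv P.m b)"
        using c by (simp add: m_ac)
      finally show "\<phi> (a \<otimes> b) \<otimes> inv P.m (a \<otimes> b) = (\<phi> a \<otimes> inv P.m a) \<otimes> (\<phi> b \<otimes> inv P.m b)" .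
    qed
  qed
  show ?thesis
  proof
    assume "\<exists>A0. subgroup A0 G \<and> finite (rcosets A0) \<and>
            (\<exists>\<alpha>. padic_scalar \<alpha> \<and> (\<forall>a\<in>A0. \<phi> a = padic_mult G \<alpha> a))"
    then obtain A0 \<alpha> where A0: "subgroup A0 G" "finite (rcosets A0)" and sc: "padic_scalar \<alpha>"
      and eq: "\<And>a. a \<in> A0 \<Longrightarrow> \<phi> a = padic_mult G \<alpha> a" by blast
    interpret P: PM G \<alpha> using per sc comm_group_axioms by (simp add: PM_def PM_axioms_def)
    define \<psi> where "\<psi> = (\<lambda>a. \<phi> a \<otimes> inv (padic_mult G \<alpha> a))"
    have ph: "\<psi> \<in> hom G G" using psi_hom[OF sc] unfolding \<psi>_def .
    interpret H: group_hom G G \<psi> using ph by (simp add: group_hom_axioms.intro group_hom_def is_group)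
    define A1 where "A1 = \<psi> ` carrier G"
    have sA1: "subgroup A1 G" unfolding A1_def by (rule H.img_is_subgroup)
    have psi0: "\<psi> a = \<one>" if "a \<in> A0" for a
    proof -
      have "a \<in> carrier G" using subgroup.mem_carrier[OF A0(1) that] .
      then show ?thesis using eq[OF that] P.m_closed unfolding \<psi>_def by simp
    qed
    have "finite A1"
    proof -
      have "A1 = (\<Union>C\<in>rcosets A0. \<psi> ` C)"
        unfolding A1_def using rcosets_part_G[OF A0(1)] by auto
      moreover have "finite (\<psi> ` C)" if C: "C \<in> rcosets A0" for C
      proof -
        obtain a where a: "a \<in> carrier G" "C = A0 #> a" using C by (auto simp: RCOSETS_def)
        have "\<psi> ` C \<subseteq> {\<psi> a}"
        proof
          fix y assume "y \<in> \<psi> ` C"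
          then obtain h where h: "h \<in> A0" "y = \<psi> (h \<otimes> a)" using a unfolding r_coset_def by auto
          have "h \<in> carrier G" using subgroup.mem_carrier[OF A0(1) h(1)] .
          then show "y \<in> {\<psi> a}" using h a psi0 by simp
        qed
        then show ?thesis using finite_subset by blast
      qed
      ultimately show ?thesis using A0(2) by simp
    qed
    moreover have "\<phi> ` A1 \<subseteq> A1"
    proof
      fix y assume "y \<in> \<phi> ` A1"
      then obtain a where a: "a \<in> carrier G" "y = \<phi> (\<psi> a)" unfolding A1_def by auto
      have "\<phi> (\<psi> a) = \<phi> (\<phi> a) \<otimes> inv (\<phi> (P.m a))"
        unfolding \<psi>_def using a P.m_closed by simp
      also have "\<dots> = \<psi> (\<phi> a)" unfolding \<psi>_def using P.m_hom_comm[OF hom a(1)] by simp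
      finally show "y \<in> A1" using a unfolding A1_def by auto
    qed
    moreover have "A1 #> \<phi> a = padic_mult (G Mod A1) \<alpha> (A1 #> a)" if a: "a \<in> carrier G" for a
    proof -
      have c: "P.m a \<in> carrier G" "\<psi> a \<in> carrier G" using a P.m_closed by auto
      have "\<phi> a = \<psi> a \<otimes> P.m a" unfolding \<psi>_def using a c(1) by (simp add: m_assoc)
      then have "A1 #> \<phi> a = (A1 #> \<psi> a) #> P.m a"
        using c coset_mult_assoc sA1 subgroup.subset by metis
      also have "\<dots> = A1 #> P.m a" using coset_join2[OF c(2) sA1] a unfolding A1_def by auto
      finally show ?thesis using P.m_quot[OF sA1 a] by simp
    qed
    ultimately show "\<exists>A1. subgroup A1 G \<and> finite A1 \<and> \<phi> ` A1 \<subseteq> A1 \<and>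
            (\<exists>\<alpha>. padic_scalar \<alpha> \<and>
               (\<forall>a\<in>carrier G. A1 #> \<phi> a = padic_mult (G Mod A1) \<alpha> (A1 #> a)))"
      using sA1 sc by blast
  next
    assume "\<exists>A1. subgroup A1 G \<and> finite A1 \<and> \<phi> ` A1 \<subseteq> A1 \<and>
            (\<exists>\<alpha>. padic_scalar \<alpha> \<and>
               (\<forall>a\<in>carrier G. A1 #> \<phi> a = padic_mult (G Mod A1) \<alpha> (A1 #> a)))"
    then obtain A1 \<alpha> where A1: "subgroup A1 G" "finite A1" and sc: "padic_scalar \<alpha>"
      and eq: "\<And>a. a \<in> carrier G \<Longrightarrow> A1 #> \<phi> a = padic_mult (G Mod A1) \<alpha> (A1 #> a)" by blast
    interpret P: PM G \<alpha> using per sc comm_group_axioms by (simp add: PM_def PM_axioms_def)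
    define \<psi> where "\<psi> = (\<lambda>a. \<phi> a \<otimes> inv (padic_mult G \<alpha> a))"
    have ph: "\<psi> \<in> hom G G" using psi_hom[OF sc] unfolding \<psi>_def .
    interpret H: group_hom G G \<psi> using ph by (simp add: group_hom_axioms.intro group_hom_def is_group)
    have psiA1: "\<psi> a \<in> A1" if a: "a \<in> carrier G" for a
    proof -
      have c: "P.m a \<in> carrier G" "\<phi> a \<in> carrier G" using a P.m_closed by auto
      have "A1 #> P.m a = A1 #> \<phi> a" using eq[OF a] P.m_quot[OF A1(1) a] by simp
      then have "\<phi> a \<in> A1 #> P.m a" using repr_independenceD[OF A1(1) c(2)] by simp
      then show ?thesis unfolding \<psi>_def using subgroup.rcos_module_imp[OF A1(1) is_group c(1)] by simp
    qed
    define A0 where "A0 = kernel G G \<psi>"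
    have sA0: "subgroup A0 G" unfolding A0_def by (rule H.subgroup_kernel)
    have eq0: "\<phi> a = P.m a" if "a \<in> A0" for a
    proof -
      have a: "a \<in> carrier G" "\<phi> a \<otimes> inv P.m a = \<one>" using that unfolding A0_def kernel_def \<psi>_def by auto
      have c: "P.m a \<in> carrier G" "\<phi> a \<in> carrier G" using a P.m_closed by auto
      have "\<phi> a = (\<phi> a \<otimes> inv P.m a) \<otimes> P.m a" using c by (simp add: m_assoc)
      then show ?thesis using a c by simp
    qed
    have "finite (rcosets A0)"
    proof -
      define r where "r y = A0 #> (SOME a. a \<in> carrier G \<and> \<psi> a = y)" for y
      have "rcosets A0 \<subseteq> r ` A1"
      proof
        fix C assume "C \<in> rcosets A0"
        then obtain a where a: "a \<in> carrier G" "C = A0 #> a" by (auto simp: RCOSETS_def)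
        let ?b = "SOME b. b \<in> carrier G \<and> \<psi> b = \<psi> a"
        have b: "?b \<in> carrier G \<and> \<psi> ?b = \<psi> a" by (rule someI[of _ a]) (use a in simp)
        have "\<psi> (?b \<otimes> inv a) = \<one>" using a b by simp
        then have "?b \<otimes> inv a \<in> A0" using a b unfolding A0_def kernel_def by simp
        then have "?b \<in> A0 #> a" using subgroup.rcos_module_rev[OF sA0 is_group a(1)] b by blast
        then have "A0 #> a = A0 #> ?b" using repr_independence[OF _ a(1) sA0] by blast
        then have "C = r (\<psi> a)" unfolding r_def using a by simp
        then show "C \<in> r ` A1" using psiA1 a by blast
      qed
      then show ?thesis by (rule finite_surj[OF A1(2)])
    qed
    then show "\<exists>A0. subgroup A0 G \<and> finite (rcosets A0) \<and>
            (\<exists>\<alpha>. padic_scalar \<alpha> \<and> (\<forall>a\<in>A0. \<phi> a = padic_mult G \<alpha> a))"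
      using sA0 sc eq0 by (intro exI[of _ A0] conjI exI[of _ \<alpha>]) auto
  qed
qed


end

theorem proposition2p4:
  fixes G :: "('a, 'b) monoid_scheme" and \<phi> :: "'a \<Rightarrow> 'a"
  assumes "comm_group G"
    and "periodic_group G"
    and "\<phi> \<in> hom G G"
  shows "(\<exists>A0. subgroup A0 G \<and> finite (rcosets\<^bsub>G\<^esub> A0) \<and>
            (\<exists>\<alpha>. padic_scalar \<alpha> \<and> (\<forall>a\<in>A0. \<phi> a = padic_mult G \<alpha> a)))
     \<longleftrightarrow>
         (\<exists>A1. subgroup A1 G \<and> finite A1 \<and> \<phi> ` A1 \<subseteq> A1 \<and>
            (\<exists>\<alpha>. padic_scalar \<alpha> \<and>
               (\<forall>a\<in>carrier G. A1 #>\<^bsub>G\<^esub> \<phi> a = padic_mult (G Mod A1) \<alpha> (A1 #>\<^bsub>G\<^esub> a))))"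
  using MainL.main[OF MainL.intro[OF assms(1) MainL_axioms.intro[OF assms(2,3)]]] .

end
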